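(* For every configuration $C$ of the Krivine Abstract Machine, $C \to^{*} \langle \lambda x.t, []\rangle$ for some $x$ and $t$ if and only if $[\![C]\!]$ has a weak observable action on the coname $\overline{b}$ with respect to the empty set of hidden names, i.e., there exist $P', Q, R$ with $[\![C]\!] \Rightarrow P'$ and $P' \xrightarrow{\overline{b}\langle Q\rangle} R$.
   Context: HOcore processes are given by $P,Q ::= a(x).P \mid \overline{a}\langle P\rangle \mid P \parallel Q \mid x \mid 0$, where $a,b,\dots$ are channel names and $x,y,\dots$ are process variables; $a(x).P$ binds $x$ in $P$; parallel composition is associative and commutative with unit $0$. The labelled transition system has labels $\tau$, $\overline{a}\langle P\rangle$ and $a(P)$, with rules: $\overline{a}\langle P\rangle \xrightarrow{\overline{a}\langle P\rangle} 0$; $a(x).Q \xrightarrow{a(P)} Q\{P/x\}$; if $P \xrightarrow{l} P'$ then $P\parallel Q \xrightarrow{l} P'\parallel Q$ (and symmetrically); if $P \xrightarrow{\overline{a}\langle R\rangle} P'$ and $Q \xrightarrow{a(R)} Q'$ then $P \parallel Q \xrightarrow{\tau} P'\parallel Q'$ (and symmetrically). $\Rightarrow$ is the reflexive transitive closure of $\xrightarrow{\tau}$. KAM: terms $t,s ::= x \mid t\,s \mid \lambda x.t$; stacks $\pi ::= t :: \pi \mid []$; configurations $C ::= \langle t, \pi\rangle$ with all terms closed. Transitions: $\langle t\,s, \pi\rangle \to \langle t, s :: \pi\rangle$ and $\langle \lambda x.t, s::\pi\rangle \to \langle t\{s/x\}, \pi\rangle$. Translation (channel names $c, hd, b$; $p$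 a fresh variable): $[\![[]]\!] = \overline{b}\langle 0\rangle$; $[\![t::\pi]\!] = \overline{hd}\langle [\![t]\!]\rangle \parallel \overline{c}\langle [\![\pi]\!]\rangle$; $[\![\langle t,\pi\rangle]\!] = [\![t]\!] \parallel \overline{c}\langle[\![\pi]\!]\rangle$; $[\![t\,s]\!] = c(p).([\![t]\!] \parallel \overline{c}\langle \overline{hd}\langle[\![s]\!]\rangle \parallel \overline{c}\langle p\rangle\rangle)$; $[\![\lambda x.t]\!] = c(p).(hd(x).[\![t]\!] \parallel p)$; $[\![x]\!] = x$. *)

theory Defs
  imports Main
begin

(* channel names: the three distinguished names c, hd, b plus infinitely many others *)
datatype name = Nc | Nhd | Nb | Nm nat

(* process variables: variables coming from lambda-terms (TV x) and the fresh variable p *)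
datatype pvar = TV nat | Pv

datatype proc =
    Inp name pvar proc
  | Out name proc
  | Par proc proc
  | PVar pvar
  | Nil

(* substitution P{Q/x}; only ever applied with closed Q, so no capture can occur *)
fun psubst :: "proc \<Rightarrow> pvar \<Rightarrow> proc \<Rightarrow> proc" where
  "psubst (Inp a y P) x Q = (if y = x then Inp a y P else Inp a y (psubst P x Q))"
| "psubst (Out a P) x Q = Out a (psubst P x Q)"
| "psubst (Par P1 P2) x Q = Par (psubst P1 x Q) (psubst P2 x Q)"
| "psubst (PVar y) x Q = (if y = x then Q else PVar y)"
| "psubst Nil x Q = Nil"

datatype label = Tau | OutL name proc | InL name proc

inductive trans :: "proc \<Rightarrow> label \<Rightarrow> proc \<Rightarrow> bool" where
  t_out: "trans (Out a P) (OutL a P) Nil"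
| t_inp: "trans (Inp a x Q) (InL a P) (psubst Q x P)"
| t_parL: "trans P l P' \<Longrightarrow> trans (Par P Q) l (Par P' Q)"
| t_parR: "trans Q l Q' \<Longrightarrow> trans (Par P Q) l (Par P Q')"
| t_comL: "trans P (OutL a R) P' \<Longrightarrow> trans Q (InL a R) Q' \<Longrightarrow> trans (Par P Q) Tau (Par P' Q')"
| t_comR: "trans P (InL a R) P' \<Longrightarrow> trans Q (OutL a R) Q' \<Longrightarrow> trans (Par P Q) Tau (Par P' Q')"

definition tau_step :: "proc \<Rightarrow> proc \<Rightarrow> bool" where
  "tau_step P Q \<longleftrightarrow> trans P Tau Q"

definition wtau :: "proc \<Rightarrow> proc \<Rightarrow> bool" where
  "wtau = tau_step\<^sup>*\<^sup>*"

datatype lterm = LVar nat | App lterm lterm | Lam nat lterm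

fun fv :: "lterm \<Rightarrow> nat set" where
  "fv (LVar x) = {x}"
| "fv (App t s) = fv t \<union> fv s"
| "fv (Lam x t) = fv t - {x}"

(* t{s/x}; only ever applied with closed s *)
fun lsubst :: "lterm \<Rightarrow> nat \<Rightarrow> lterm \<Rightarrow> lterm" where
  "lsubst (LVar y) x s = (if y = x then s else LVar y)"
| "lsubst (App t1 t2) x s = App (lsubst t1 x s) (lsubst t2 x s)"
| "lsubst (Lam y t) x s = (if y = x then Lam y t else Lam y (lsubst t x s))"

type_synonym stack = "lterm list"
type_synonym config = "lterm \<times> stack"

definition closed_config :: "config \<Rightarrow> bool" where
  "closed_config C \<longleftrightarrow> fv (fst C) = {} \<and> (\<forall>s\<in>set (snd C). fv s = {})"

inductive kam_step :: "config \<Rightarrow> config \<Rightarrow> bool" where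
  k_push: "kam_step (App t s, \<pi>) (t, s # \<pi>)"
| k_grab: "kam_step (Lam x t, s # \<pi>) (lsubst t x s, \<pi>)"

fun tr_term :: "lterm \<Rightarrow> proc" where
  "tr_term (App t s) =
     Inp Nc Pv (Par (tr_term t) (Out Nc (Par (Out Nhd (tr_term s)) (Out Nc (PVar Pv)))))"
| "tr_term (Lam x t) = Inp Nc Pv (Par (Inp Nhd (TV x) (tr_term t)) (PVar Pv))"
| "tr_term (LVar x) = PVar (TV x)"

fun tr_stack :: "stack \<Rightarrow> proc" where
  "tr_stack [] = Out Nb Nil"
| "tr_stack (t # \<pi>) = Par (Out Nhd (tr_term t)) (Out Nc (tr_stack \<pi>))"

fun tr_config :: "config \<Rightarrow> proc" where
  "tr_config (t, \<pi>) = Par (tr_term t) (Out Nc (tr_stack \<pi>))"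

end

theory Submission
  imports Defs "HOL-Library.Multiset"
begin

fun comps :: "proc \<Rightarrow> proc multiset" where
  "comps (Par P Q) = comps P + comps Q"
| "comps Nil = {#}"
| "comps P = {#P#}"

lemma comps_tr_term[simp]: "comps (tr_term t) = {#tr_term t#}"
  by (cases t) auto

lemma tr_term_not_out[simp]: "tr_term t \<noteq> Out a R"
  by (cases t) auto

lemma tr_term_not_out'[simp]: "Out a R \<noteq> tr_term t"
  by (cases t) auto

lemma psubst_tr_Pv[simp]: "psubst (tr_term t) Pv P = tr_term t"
  by (induction t) auto

lemma psubst_tr_lsubst: "psubst (tr_term t) (TV x) (tr_term s) = tr_term (lsubst t x s)"
  by (induction t) auto

lemma fv_lsubst: "fv (lsubst t x s) \<subseteq> (fv t - {x}) \<union> fv s"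
  by (induction t) auto

lemma trans_comps:
  "trans P l Q \<Longrightarrow> (case l of
     OutL a R \<Rightarrow> (\<exists>M. comps P = add_mset (Out a R) M \<and> comps Q = M)
   | InL a R \<Rightarrow> (\<exists>y B M. comps P = add_mset (Inp a y B) M \<and> comps Q = comps (psubst B y R) + M)
   | Tau \<Rightarrow> (\<exists>a R y B M. comps P = add_mset (Out a R) (add_mset (Inp a y B) M) \<and>
        comps Q = comps (psubst B y R) + M))"
proof (induction rule: trans.induct)
  case (t_parL P l P' Q)
  then show ?case
  proof (cases l)
    case Tau
    then show ?thesis using t_parL
      by simp (metis add_mset_add_single union_assoc union_commute)
  next
    case (OutL a R)
    then show ?thesis using t_parL by auto
  next
    case (InL a R)
    with t_parL obtain y B M where "comps P = add_mset (Inp a y B) M" "comps P' = comps (psubst B y R) + M" by auto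
    then show ?thesis using InL by (simp, intro exI[of _ y] exI[of _ B] exI[of _ "M + comps Q"]) (simp add: ac_simps)
  qed
next
  case (t_parR Q l Q' P)
  then show ?case
  proof (cases l)
    case Tau
    then show ?thesis using t_parR
      by simp (metis add_mset_add_single union_assoc union_commute)
  next
    case (OutL a R)
    then show ?thesis using t_parR by auto
  next
    case (InL a R)
    with t_parR obtain y B M where "comps Q = add_mset (Inp a y B) M" "comps Q' = comps (psubst B y R) + M" by auto
    then show ?thesis using InL by (simp, intro exI[of _ y] exI[of _ B] exI[of _ "M + comps P"]) (simp add: ac_simps)
  qed
next
  case (t_comL P a R P' Q Q')
  then obtain M1 y B M2 where "comps P = add_mset (Out a R) M1" "comps P' = M1"
    "comps Q = add_mset (Inp a y B) M2" "comps Q' = comps (psubst B y R) + M2" by auto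
  then show ?case by (simp, intro exI[of _ a] exI[of _ R] exI[of _ y] exI[of _ B] exI[of _ "M1+M2"]) (simp add: ac_simps)
next
  case (t_comR P a R P' Q Q')
  then obtain M1 y B M2 where "comps Q = add_mset (Out a R) M1" "comps Q' = M1"
    "comps P = add_mset (Inp a y B) M2" "comps P' = comps (psubst B y R) + M2" by auto
  then show ?case by (simp, intro exI[of _ a] exI[of _ R] exI[of _ y] exI[of _ B] exI[of _ "M1+M2"]) (simp add: ac_simps)
qed auto

lemma B_out: "comps P = add_mset (Out a R) M \<Longrightarrow> \<exists>Q. trans P (OutL a R) Q \<and> comps Q = M"
proof (induction P arbitrary: M)
  case (Par P1 P2)
  have "Out a R \<in># comps P1 + comps P2" using Par.prems by simp
  then consider "Out a R \<in># comps P1" | "Out a R \<in># comps P2" by auto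
  then show ?case
  proof cases
    case 1
    then obtain M1 where m: "comps P1 = add_mset (Out a R) M1" by (metis multi_member_split)
    with Par.IH(1) obtain Q where "trans P1 (OutL a R) Q" "comps Q = M1" by blast
    moreover have "M = M1 + comps P2" using Par.prems m by simp
    ultimately show ?thesis by (intro exI[of _ "Par Q P2"]) (auto intro: t_parL)
  next
    case 2
    then obtain M1 where m: "comps P2 = add_mset (Out a R) M1" by (metis multi_member_split)
    with Par.IH(2) obtain Q where "trans P2 (OutL a R) Q" "comps Q = M1" by blast
    moreover have "M = comps P1 + M1" using Par.prems m by simp
    ultimately show ?thesis by (intro exI[of _ "Par P1 Q"]) (auto intro: t_parR)
  qed
qed (auto intro: t_out)

lemma B_in: "comps P = add_mset (Inp a y B) M \<Longrightarrow> \<exists>Q. trans P (InL a R) Q \<and> comps Q = comps (psubst B y R) + M"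
proof (induction P arbitrary: M)
  case (Par P1 P2)
  have "Inp a y B \<in># comps P1 + comps P2" using Par.prems by simp
  then consider "Inp a y B \<in># comps P1" | "Inp a y B \<in># comps P2" by auto
  then show ?case
  proof cases
    case 1
    then obtain M1 where m: "comps P1 = add_mset (Inp a y B) M1" by (metis multi_member_split)
    with Par.IH(1) obtain Q where "trans P1 (InL a R) Q" "comps Q = comps (psubst B y R) + M1" by blast
    moreover have "M = M1 + comps P2" using Par.prems m by simp
    ultimately show ?thesis by (intro exI[of _ "Par Q P2"]) (auto intro: t_parL)
  next
    case 2
    then obtain M1 where m: "comps P2 = add_mset (Inp a y B) M1" by (metis multi_member_split)
    with Par.IH(2) obtain Q where "trans P2 (InL a R) Q" "comps Q = comps (psubst B y R) + M1" by blast
    moreover have "M = comps P1 + M1" using Par.prems m by simp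
    ultimately show ?thesis by (intro exI[of _ "Par P1 Q"]) (auto intro: t_parR)
  qed
qed (auto intro: t_inp)

lemma B_tau: "comps P = add_mset (Out a R) (add_mset (Inp a y B) M) \<Longrightarrow>
  \<exists>Q. trans P Tau Q \<and> comps Q = comps (psubst B y R) + M"
proof (induction P arbitrary: M)
  case (Par P1 P2)
  have o: "Out a R \<in># comps P1 + comps P2" and i: "Inp a y B \<in># comps P1 + comps P2"
    using Par.prems by simp_all
  consider "Out a R \<in># comps P1" "Inp a y B \<in># comps P2"
    | "Out a R \<in># comps P2" "Inp a y B \<in># comps P1"
    | "Out a R \<in># comps P1" "Inp a y B \<notin># comps P2"
    | "Out a R \<in># comps P2" "Inp a y B \<notin># comps P1"
    using o by auto
  then show ?case
  proof cases
    case 1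
    then obtain M1 M2 where m1: "comps P1 = add_mset (Out a R) M1" and m2: "comps P2 = add_mset (Inp a y B) M2"
      by (metis multi_member_split)
    obtain Q1 where q1: "trans P1 (OutL a R) Q1" "comps Q1 = M1" using B_out[OF m1] by blast
    obtain Q2 where q2: "trans P2 (InL a R) Q2" "comps Q2 = comps (psubst B y R) + M2" using B_in[OF m2] by blast
    have "M = M1 + M2" using Par.prems m1 m2 by simp
    then show ?thesis using q1 q2 by (intro exI[of _ "Par Q1 Q2"]) (auto intro: t_comL simp: ac_simps)
  next
    case 2
    then obtain M1 M2 where m1: "comps P2 = add_mset (Out a R) M1" and m2: "comps P1 = add_mset (Inp a y B) M2"
      by (metis multi_member_split)
    obtain Q1 where q1: "trans P2 (OutL a R) Q1" "comps Q1 = M1" using B_out[OF m1] by blast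
    obtain Q2 where q2: "trans P1 (InL a R) Q2" "comps Q2 = comps (psubst B y R) + M2" using B_in[OF m2] by blast
    have "M = M1 + M2" using Par.prems m1 m2 by (simp add: ac_simps)
    then show ?thesis using q1 q2 by (intro exI[of _ "Par Q2 Q1"]) (auto intro: t_comR simp: ac_simps)
  next
    case 3
    then obtain M1 where m1: "comps P1 = add_mset (Out a R) M1" by (metis multi_member_split)
    have "Inp a y B \<in># M1" using 3 i m1 by auto
    then obtain M2 where m2: "M1 = add_mset (Inp a y B) M2" by (metis multi_member_split)
    obtain Q where "trans P1 Tau Q" "comps Q = comps (psubst B y R) + M2" using Par.IH(1) m1 m2 by blast
    moreover have "M = M2 + comps P2" using Par.prems m1 m2 by simp
    ultimately show ?thesis by (intro exI[of _ "Par Q P2"]) (auto intro: t_parL simp: ac_simps)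
  next
    case 4
    then obtain M1 where m1: "comps P2 = add_mset (Out a R) M1" by (metis multi_member_split)
    have "Inp a y B \<in># M1" using 4 i m1 by auto
    then obtain M2 where m2: "M1 = add_mset (Inp a y B) M2" by (metis multi_member_split)
    obtain Q where "trans P2 Tau Q" "comps Q = comps (psubst B y R) + M2" using Par.IH(2) m1 m2 by blast
    moreover have "M = comps P1 + M2" using Par.prems m1 m2 by simp
    ultimately show ?thesis by (intro exI[of _ "Par P1 Q"]) (auto intro: t_parR simp: ac_simps)
  qed
qed auto

lemma wtau_step: "tau_step P Q \<Longrightarrow> wtau Q R \<Longrightarrow> wtau P R"
  unfolding wtau_def by (rule converse_rtranclp_into_rtranclp)

lemma fwd:
  assumes "kam_step\<^sup>*\<^sup>* C (Lam x t, [])"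
  shows "comps P = {#tr_term (fst C), Out Nc (tr_stack (snd C))#} \<Longrightarrow>
    \<exists>P'. wtau P P' \<and> Out Nb Nil \<in># comps P'"
  using assms
proof (induction arbitrary: P rule: converse_rtranclp_induct)
  case base
  have "comps P = add_mset (Out Nc (Out Nb Nil)) (add_mset (Inp Nc Pv (Par (Inp Nhd (TV x) (tr_term t)) (PVar Pv))) {#})"
    using base by (simp add: add_mset_commute)
  from B_tau[OF this] obtain Q where "trans P Tau Q"
    "comps Q = comps (psubst (Par (Inp Nhd (TV x) (tr_term t)) (PVar Pv)) Pv (Out Nb Nil))" by auto
  then show ?case unfolding wtau_def tau_step_def
    by (intro exI[of _ Q]) auto
next
  case (step C C')
  from step.hyps(1) show ?case
  proof cases
    case (k_push t1 t2 \<pi>)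
    have "comps P = add_mset (Out Nc (tr_stack \<pi>)) (add_mset (Inp Nc Pv (Par (tr_term t1) (Out Nc (Par (Out Nhd (tr_term t2)) (Out Nc (PVar Pv)))))) {#})"
      using step.prems k_push by (simp add: add_mset_commute)
    from B_tau[OF this] obtain Q where q: "trans P Tau Q"
      "comps Q = {#tr_term (fst C'), Out Nc (tr_stack (snd C'))#}" using k_push by auto
    from step.IH[OF q(2)] q(1) show ?thesis by (meson wtau_step tau_step_def)
  next
    case (k_grab x' t' s \<pi>)
    have "comps P = add_mset (Out Nc (tr_stack (s # \<pi>))) (add_mset (Inp Nc Pv (Par (Inp Nhd (TV x') (tr_term t')) (PVar Pv))) {#})"
      using step.prems k_grab by (simp add: add_mset_commute)
    from B_tau[OF this] obtain Q1 where q1: "trans P Tau Q1"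
      "comps Q1 = add_mset (Out Nhd (tr_term s)) (add_mset (Inp Nhd (TV x') (tr_term t')) {#Out Nc (tr_stack \<pi>)#})"
      by (auto simp: add_mset_commute)
    from B_tau[OF q1(2)] obtain Q2 where q2: "trans Q1 Tau Q2"
      "comps Q2 = {#tr_term (fst C'), Out Nc (tr_stack (snd C'))#}" using k_grab
      by (auto simp: psubst_tr_lsubst)
    from step.IH[OF q2(2)] q1(1) q2(1) show ?thesis by (meson wtau_step tau_step_def)
  qed
qed

definition Rinv :: "config \<Rightarrow> proc multiset \<Rightarrow> bool" where
  "Rinv C M \<longleftrightarrow> (\<exists>t \<pi>. kam_step\<^sup>*\<^sup>* C (t, \<pi>) \<and> closed_config (t, \<pi>) \<and>
     (M = {#tr_term t, Out Nc (tr_stack \<pi>)#} \<or>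
      (\<exists>x t'. t = Lam x t' \<and> M = add_mset (Inp Nhd (TV x) (tr_term t')) (comps (tr_stack \<pi>)))))"

lemma comps_tr_stack_out: "X \<in># comps (tr_stack \<pi>) \<Longrightarrow> \<exists>a R. X = Out a R"
  by (cases \<pi>) auto

lemma Rinv_step:
  assumes "Rinv C (comps P)" "tau_step P Q"
  shows "Rinv C (comps Q)"
proof -
  from trans_comps[OF assms(2)[unfolded tau_step_def]] obtain a R y B M where
    cp: "comps P = add_mset (Out a R) (add_mset (Inp a y B) M)" and
    cq: "comps Q = comps (psubst B y R) + M" by auto
  from assms(1) obtain t \<pi> where reach: "kam_step\<^sup>*\<^sup>* C (t, \<pi>)" and cl: "closed_config (t, \<pi>)" and
    disj: "comps P = {#tr_term t, Out Nc (tr_stack \<pi>)#} \<or>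
      (\<exists>x t'. t = Lam x t' \<and> comps P = add_mset (Inp Nhd (TV x) (tr_term t')) (comps (tr_stack \<pi>)))"
    unfolding Rinv_def by blast
  from disj show ?thesis
  proof
    assume S1: "comps P = {#tr_term t, Out Nc (tr_stack \<pi>)#}"
    have "Out a R \<in># comps P" using cp by simp
    hence o: "a = Nc" "R = tr_stack \<pi>" using S1 by auto
    have "Inp a y B \<in># comps P" using cp by simp
    hence ti: "tr_term t = Inp a y B" using S1 by auto
    have M: "M = {#}" using cp S1 o ti by (simp add: add_mset_commute)
    show ?thesis
    proof (cases t)
      case (LVar v)
      then show ?thesis using ti by simp
    next
      case (App t1 t2)
      have "kam_step\<^sup>*\<^sup>* C (t1, t2 # \<pi>)" using reach App
        by (meson k_push rtranclp.rtrancl_into_rtrancl)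
      moreover have "closed_config (t1, t2 # \<pi>)" using cl App by (auto simp: closed_config_def)
      moreover have "comps Q = {#tr_term t1, Out Nc (tr_stack (t2 # \<pi>))#}"
        using cq M ti App o by auto
      ultimately show ?thesis unfolding Rinv_def by blast
    next
      case (Lam x t')
      have "comps Q = add_mset (Inp Nhd (TV x) (tr_term t')) (comps (tr_stack \<pi>))"
        using cq M ti Lam o by auto
      then show ?thesis unfolding Rinv_def using reach cl Lam by blast
    qed
  next
    assume "\<exists>x t'. t = Lam x t' \<and> comps P = add_mset (Inp Nhd (TV x) (tr_term t')) (comps (tr_stack \<pi>))"
    then obtain x t' where L: "t = Lam x t'" and S2: "comps P = add_mset (Inp Nhd (TV x) (tr_term t')) (comps (tr_stack \<pi>))"
      by blast
    have "Inp a y B \<in># comps P" using cp by simp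
    hence i: "Inp a y B = Inp Nhd (TV x) (tr_term t')" using S2 comps_tr_stack_out by fastforce
    hence iv: "a = Nhd" "y = TV x" "B = tr_term t'" by auto
    have st: "comps (tr_stack \<pi>) = add_mset (Out a R) M" using cp S2 i
      by (simp add: add_mset_commute)
    show ?thesis
    proof (cases \<pi>)
      case Nil
      then show ?thesis using st iv by simp
    next
      case (Cons s \<pi>')
      from st Cons iv have R: "R = tr_term s" and MM: "M = {#Out Nc (tr_stack \<pi>')#}"
        by (auto simp: add_eq_conv_ex)
      have "kam_step\<^sup>*\<^sup>* C (lsubst t' x s, \<pi>')" using reach L Cons
        by (meson k_grab rtranclp.rtrancl_into_rtrancl)
      moreover have "closed_config (lsubst t' x s, \<pi>')" using cl L Cons fv_lsubst[of t' x s]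
        by (auto simp: closed_config_def)
      moreover have "comps Q = {#tr_term (lsubst t' x s), Out Nc (tr_stack \<pi>')#}"
        using cq iv R MM by (simp add: psubst_tr_lsubst)
      ultimately show ?thesis unfolding Rinv_def by blast
    qed
  qed
qed

lemma Rinv_wtau: "closed_config C \<Longrightarrow> wtau (tr_config C) P \<Longrightarrow> Rinv C (comps P)"
proof -
  assume cl: "closed_config C" and w: "wtau (tr_config C) P"
  obtain t \<pi> where C: "C = (t, \<pi>)" by (cases C)
  have "Rinv C (comps (tr_config C))" unfolding Rinv_def using cl C
    by (intro exI[of _ t] exI[of _ \<pi>]) (auto simp: add_mset_commute)
  from w[unfolded wtau_def] this show ?thesis
    by (induction rule: rtranclp_induct) (auto intro: Rinv_step)
qed

lemma Rinv_barb: assumes "Rinv C (comps P)" "Out Nb Q \<in># comps P" shows "\<exists>x t. kam_step\<^sup>*\<^sup>* C (Lam x t, [])"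
proof -
  from assms(1) obtain t \<pi> where r: "kam_step\<^sup>*\<^sup>* C (t, \<pi>)" and
    d: "comps P = {#tr_term t, Out Nc (tr_stack \<pi>)#} \<or>
      (\<exists>x t'. t = Lam x t' \<and> comps P = add_mset (Inp Nhd (TV x) (tr_term t')) (comps (tr_stack \<pi>)))"
    unfolding Rinv_def by blast
  have "comps P \<noteq> {#tr_term t, Out Nc (tr_stack \<pi>)#}" using assms(2) by auto
  with d obtain x t' where "t = Lam x t'" "comps P = add_mset (Inp Nhd (TV x) (tr_term t')) (comps (tr_stack \<pi>))" by blast
  with r assms(2) show ?thesis by (cases \<pi>) auto
qed

theorem corollary3p2:
  fixes C :: config
  assumes "closed_config C"
  shows "(\<exists>x t. kam_step\<^sup>*\<^sup>* C (Lam x t, [])) \<longleftrightarrow>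
         (\<exists>P' Q R. wtau (tr_config C) P' \<and> trans P' (OutL Nb Q) R)"
proof
  assume "\<exists>x t. kam_step\<^sup>*\<^sup>* C (Lam x t, [])"
  then obtain x t where k: "kam_step\<^sup>*\<^sup>* C (Lam x t, [])" by blast
  obtain t0 \<pi> where C: "C = (t0, \<pi>)" by (cases C)
  have "comps (tr_config C) = {#tr_term (fst C), Out Nc (tr_stack (snd C))#}" using C by simp
  from fwd[OF k this] obtain P' where p: "wtau (tr_config C) P'" "Out Nb Nil \<in># comps P'" by blast
  from p(2) obtain M where "comps P' = add_mset (Out Nb Nil) M" by (metis multi_member_split)
  from B_out[OF this] p(1) show "\<exists>P' Q R. wtau (tr_config C) P' \<and> trans P' (OutL Nb Q) R" by blast
next
  assume "\<exists>P' Q R. wtau (tr_config C) P' \<and> trans P' (OutL Nb Q) R"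
  then obtain P' Q R where w: "wtau (tr_config C) P'" and t: "trans P' (OutL Nb Q) R" by blast
  from trans_comps[OF t] have "Out Nb Q \<in># comps P'" by auto
  with Rinv_wtau[OF assms w] show "\<exists>x t. kam_step\<^sup>*\<^sup>* C (Lam x t, [])" by (rule Rinv_barb)
qed

end
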